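(* Let $(u_1,v_1),\ldots,(u_k,v_k)\in\mathbb{R}^2$ and $d\in\mathbb{R}$. Define the symmetric $2^k\times 2^k$ matrix, affine in $x,y,d$, $$L_k(x,y)\;=\;d\cdot I_{2^k}+\begin{bmatrix}x-u_1 & y-v_1\\ y-v_1 & -x+u_1\end{bmatrix}\oplus\cdots\oplus\begin{bmatrix}x-u_k & y-v_k\\ y-v_k & -x+u_k\end{bmatrix}.$$ Then (as polynomial identity, also with $d,u_i,v_i$ treated as indeterminates) $$\det L_k(x,y)\;=\;p_k(x,y):=\prod_{\sigma\in\{0,1\}^k}\Bigl(d-\sum_{i=1}^k(-1)^{\sigma_i}\sqrt{(x-u_i)^2+(y-v_i)^2}\Bigr),$$ and the convex region bounded by the $k$-ellipse satisfies $$\mathcal{E}_k:=\Bigl\{(x,y)\in\mathbb{R}^2:\sum_{i=1}^k\sqrt{(x-u_i)^2+(y-v_i)^2}\le d\Bigr\}=\{(x,y)\in\mathbb{R}^2: L_k(x,y)\succeq 0\}.$$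
   Context: The tensor (Kronecker) sum of an $m\times m$ matrix $A$ and an $n\times n$ matrix $B$ is $A\oplus B:=A\otimes I_n+I_m\otimes B$, an $mn\times mn$ matrix; it is associative, and $M_1\oplus\cdots\oplus M_k=\sum_{j}I\otimes\cdots\otimes M_j\otimes\cdots\otimes I$. $\succeq 0$ means positive semidefinite. *)

theory Defs
  imports "Jordan_Normal_Form.Determinant" "HOL-Library.FuncSet"
begin

definition kron :: "'a::semiring_0 mat \<Rightarrow> 'a mat \<Rightarrow> 'a mat" where
  "kron A B = mat (dim_row A * dim_row B) (dim_col A * dim_col B)
     (\<lambda>(i,j). A $$ (i div dim_row B, j div dim_col B) * B $$ (i mod dim_row B, j mod dim_col B))"

definition tensor_sum :: "'a::semiring_1 mat \<Rightarrow> 'a mat \<Rightarrow> 'a mat" where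
  "tensor_sum A B = kron A (1\<^sub>m (dim_row B)) + kron (1\<^sub>m (dim_row A)) B"

text \<open>Iterated tensor sum M_1 (+) ... (+) M_k (right-nested; associative).
  The empty tensor sum is the 1x1 zero matrix, the neutral element.\<close>
definition tensor_sum_list :: "'a::semiring_1 mat list \<Rightarrow> 'a mat" where
  "tensor_sum_list Ms = foldr tensor_sum Ms (0\<^sub>m 1 1)"

definition psd :: "real mat \<Rightarrow> bool" where
  "psd A \<longleftrightarrow> (\<exists>n. A \<in> carrier_mat n n \<and> A\<^sup>T = A \<and>
      (\<forall>v \<in> carrier_vec n. v \<bullet> (A *\<^sub>v v) \<ge> 0))"

definition blk :: "real \<Rightarrow> real \<Rightarrow> real \<Rightarrow> real \<Rightarrow> real mat" where
  "blk u v x y = mat_of_rows_list 2 [[x - u, y - v], [y - v, - x + u]]"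

definition Lk :: "nat \<Rightarrow> (nat \<Rightarrow> real) \<Rightarrow> (nat \<Rightarrow> real) \<Rightarrow> real \<Rightarrow> real \<Rightarrow> real \<Rightarrow> real mat" where
  "Lk k u v d x y = d \<cdot>\<^sub>m 1\<^sub>m (2^k) + tensor_sum_list (map (\<lambda>i. blk (u i) (v i) x y) [0..<k])"

end

theory Submission
  imports Defs
begin

lemma kron_carrier[simp]: "kron A B \<in> carrier_mat (dim_row A * dim_row B) (dim_col A * dim_col B)"
  unfolding kron_def by simp

lemma dim_kron[simp]: "dim_row (kron A B) = dim_row A * dim_row B" "dim_col (kron A B) = dim_col A * dim_col B"
  unfolding kron_def by simp_all

lemma kron_carrier': "A \<in> carrier_mat m n \<Longrightarrow> B \<in> carrier_mat p q \<Longrightarrow> kron A B \<in> carrier_mat (m*p) (n*q)"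
  by auto

lemma index_kron[simp]: "i < dim_row A * dim_row B \<Longrightarrow> j < dim_col A * dim_col B \<Longrightarrow>
  kron A B $$ (i,j) = A $$ (i div dim_row B, j div dim_col B) * B $$ (i mod dim_row B, j mod dim_col B)"
  unfolding kron_def by simp


lemma sum_divmod: fixes n q :: nat shows "(\<Sum>l<n*q. g (l div q) (l mod q)) = (\<Sum>a<n. \<Sum>b<q. (g a b :: 'a::comm_monoid_add))"
proof (induction n)
  case 0 then show ?case by simp
next
  case (Suc n)
  have split: "{..<Suc n*q} = {..<n*q} \<union> {n*q..<n*q+q}" by auto
  have "(\<Sum>l<Suc n*q. g (l div q) (l mod q)) = (\<Sum>l<n*q. g (l div q) (l mod q)) + (\<Sum>l\<in>{n*q..<n*q+q}. g (l div q) (l mod q))"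
    unfolding split by (rule sum.union_disjoint) auto
  also have "(\<Sum>l\<in>{n*q..<n*q+q}. g (l div q) (l mod q)) = (\<Sum>b<q. g n b)"
  proof -
    have "(\<Sum>l\<in>{n*q..<n*q+q}. g (l div q) (l mod q)) = (\<Sum>b\<in>{0..<q}. g ((b + n*q) div q) ((b+n*q) mod q))"
      using sum.shift_bounds_nat_ivl[of "\<lambda>l. g (l div q) (l mod q)" 0 "n*q" q] by (simp add: add.commute[of "n*q" q])
    also have "\<dots> = (\<Sum>b<q. g n b)" by (rule sum.cong) auto
    finally show ?thesis .
  qed
  finally show ?case using Suc.IH by simp
qed

lemma prod_divmod: fixes n q :: nat shows "(\<Prod>l<n*q. g (l div q) (l mod q)) = (\<Prod>a<n. \<Prod>b<q. (g a b :: 'a::comm_monoid_mult))"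
proof (induction n)
  case 0 then show ?case by simp
next
  case (Suc n)
  have split: "{..<Suc n*q} = {..<n*q} \<union> {n*q..<n*q+q}" by auto
  have "(\<Prod>l<Suc n*q. g (l div q) (l mod q)) = (\<Prod>l<n*q. g (l div q) (l mod q)) * (\<Prod>l\<in>{n*q..<n*q+q}. g (l div q) (l mod q))"
    unfolding split by (rule prod.union_disjoint) auto
  also have "(\<Prod>l\<in>{n*q..<n*q+q}. g (l div q) (l mod q)) = (\<Prod>b<q. g n b)"
  proof -
    have "(\<Prod>l\<in>{n*q..<n*q+q}. g (l div q) (l mod q)) = (\<Prod>b\<in>{0..<q}. g ((b + n*q) div q) ((b+n*q) mod q))"
      using prod.shift_bounds_nat_ivl[of "\<lambda>l. g (l div q) (l mod q)" 0 "n*q" q] by (simp add: add.commute[of "n*q" q])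
    also have "\<dots> = (\<Prod>b<q. g n b)" by (rule prod.cong) auto
    finally show ?thesis .
  qed
  finally show ?case using Suc.IH by simp
qed

lemma divmod_bounds: fixes i m p :: nat shows "i < m * p \<Longrightarrow> i div p < m \<and> i mod p < p"
  by (metis less_mult_imp_div_less mod_less_divisor mult.commute mult_zero_left not_gr_zero not_less0)

lemma kron_mult:
  assumes A: "A \<in> carrier_mat m n" and B: "B \<in> carrier_mat p q" and C: "C \<in> carrier_mat n r" and D: "D \<in> carrier_mat q s"
  shows "kron A B * kron C D = kron (A * C) (B * (D :: 'a::comm_semiring_0 mat))"
proof (rule eq_matI)
  fix i j assume i: "i < dim_row (kron (A * C) (B * D))" and j: "j < dim_col (kron (A * C) (B * D))"
  from i j A B C D have i': "i < m * p" and j': "j < r * s" by auto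
  note bi = divmod_bounds[OF i'] and bj = divmod_bounds[OF j']
  have dims: "dim_row A = m" "dim_col A = n" "dim_row B = p" "dim_col B = q" "dim_row C = n" "dim_col C = r" "dim_row D = q" "dim_col D = s"
    using A B C D by auto
  have "(kron A B * kron C D) $$ (i,j) = (\<Sum>l<n*q. kron A B $$ (i,l) * kron C D $$ (l,j))"
    using i' j' by (simp add: dims scalar_prod_def lessThan_atLeast0)
  also have "\<dots> = (\<Sum>l<n*q. (A $$ (i div p, l div q) * C $$ (l div q, j div s)) * (B $$ (i mod p, l mod q) * D $$ (l mod q, j mod s)))"
  proof (rule sum.cong[OF refl])
    fix l assume "l \<in> {..<n*q}"
    then have l: "l < n * q" by simp
    show "kron A B $$ (i,l) * kron C D $$ (l,j) = (A $$ (i div p, l div q) * C $$ (l div q, j div s)) * (B $$ (i mod p, l mod q) * D $$ (l mod q, j mod s))"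
      using i' j' l by (simp add: dims mult_ac)
  qed
  also have "\<dots> = (\<Sum>a<n. \<Sum>b<q. (A $$ (i div p, a) * C $$ (a, j div s)) * (B $$ (i mod p, b) * D $$ (b, j mod s)))"
    by (rule sum_divmod)
  also have "\<dots> = (\<Sum>a<n. A $$ (i div p, a) * C $$ (a, j div s)) * (\<Sum>b<q. B $$ (i mod p, b) * D $$ (b, j mod s))"
    by (simp add: sum_product)
  also have "\<dots> = kron (A * C) (B * D) $$ (i,j)"
    using i' j' bi bj by (simp add: dims scalar_prod_def lessThan_atLeast0)
  finally show "(kron A B * kron C D) $$ (i,j) = kron (A * C) (B * D) $$ (i,j)" .
qed (use A B C D in auto)

lemma transpose_kron: "transpose_mat (kron A B) = kron (transpose_mat A) (transpose_mat B)"
proof (rule eq_matI)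
  fix i j assume i: "i < dim_row (kron A\<^sup>T B\<^sup>T)" and j: "j < dim_col (kron A\<^sup>T B\<^sup>T)"
  then have i': "i < dim_col A * dim_col B" and j': "j < dim_row A * dim_row B" by auto
  show "(kron A B)\<^sup>T $$ (i, j) = kron A\<^sup>T B\<^sup>T $$ (i, j)"
    using i' j' divmod_bounds[OF i'] divmod_bounds[OF j'] by simp
qed auto

lemma kron_one: "kron (1\<^sub>m m) (1\<^sub>m n) = (1\<^sub>m (m*n) :: 'a::semiring_1 mat)"
proof (rule eq_matI)
  fix i j assume i: "i < dim_row (1\<^sub>m (m*n) :: 'a mat)" and j: "j < dim_col (1\<^sub>m (m*n) :: 'a mat)"
  then have i': "i < m * n" and j': "j < m * n" by auto
  have "(i = j) = (i div n = j div n \<and> i mod n = j mod n)"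
    by (metis div_mult_mod_eq)
  then show "kron (1\<^sub>m m) (1\<^sub>m n) $$ (i, j) = (1\<^sub>m (m*n) :: 'a mat) $$ (i, j)"
    using i' j' divmod_bounds[OF i'] divmod_bounds[OF j'] by simp
qed auto

lemma tensor_sum_list_Cons: "tensor_sum_list (M # Ms) = tensor_sum M (tensor_sum_list Ms)"
  unfolding tensor_sum_list_def by simp

definition goodt :: "real mat \<times> real mat \<times> real mat \<Rightarrow> bool" where
  "goodt z = (case z of (M,P,D) \<Rightarrow> M \<in> carrier_mat 2 2 \<and> P \<in> carrier_mat 2 2 \<and> D \<in> carrier_mat 2 2 \<and>
      P * D * transpose_mat P = M \<and> P * transpose_mat P = 1\<^sub>m 2 \<and> transpose_mat P * P = 1\<^sub>m 2)"

lemma decomp: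
  assumes "\<forall>z\<in>set zs. goodt z"
  shows "foldr kron (map (\<lambda>z. fst (snd z)) zs) (1\<^sub>m 1) \<in> carrier_mat (2^length zs) (2^length zs)
    \<and> tensor_sum_list (map (\<lambda>z. snd (snd z)) zs) \<in> carrier_mat (2^length zs) (2^length zs)
    \<and> tensor_sum_list (map fst zs) \<in> carrier_mat (2^length zs) (2^length zs)
    \<and> foldr kron (map (\<lambda>z. fst (snd z)) zs) (1\<^sub>m 1) * transpose_mat (foldr kron (map (\<lambda>z. fst (snd z)) zs) (1\<^sub>m 1)) = 1\<^sub>m (2^length zs)
    \<and> transpose_mat (foldr kron (map (\<lambda>z. fst (snd z)) zs) (1\<^sub>m 1)) * foldr kron (map (\<lambda>z. fst (snd z)) zs) (1\<^sub>m 1) = 1\<^sub>m (2^length zs)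
    \<and> foldr kron (map (\<lambda>z. fst (snd z)) zs) (1\<^sub>m 1) * tensor_sum_list (map (\<lambda>z. snd (snd z)) zs) * transpose_mat (foldr kron (map (\<lambda>z. fst (snd z)) zs) (1\<^sub>m 1)) = tensor_sum_list (map fst zs)"
  using assms
proof (induction zs)
  case Nil
  show ?case by (auto simp: tensor_sum_list_def)
next
  case (Cons z zs)
  obtain M P D where z: "z = (M,P,D)" by (cases z) auto
  let ?N = "2^length zs :: nat"
  define Q where "Q = foldr kron (map (\<lambda>z. fst (snd z)) zs) (1\<^sub>m 1)"
  define E where "E = tensor_sum_list (map (\<lambda>z. snd (snd z)) zs)"
  define T where "T = tensor_sum_list (map fst zs)"
  from Cons have IH: "Q \<in> carrier_mat ?N ?N" "E \<in> carrier_mat ?N ?N" "T \<in> carrier_mat ?N ?N"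
    "Q * Q\<^sup>T = 1\<^sub>m ?N" "Q\<^sup>T * Q = 1\<^sub>m ?N" "Q * E * Q\<^sup>T = T"
    unfolding Q_def E_def T_def by auto
  from Cons have g: "M \<in> carrier_mat 2 2" "P \<in> carrier_mat 2 2" "D \<in> carrier_mat 2 2"
      "P * D * P\<^sup>T = M" "P * P\<^sup>T = 1\<^sub>m 2" "P\<^sup>T * P = 1\<^sub>m 2"
    unfolding z goodt_def by auto
  have Q2: "foldr kron (map (\<lambda>z. fst (snd z)) (z#zs)) (1\<^sub>m 1) = kron P Q" unfolding Q_def z by simp
  have E2: "tensor_sum_list (map (\<lambda>z. snd (snd z)) (z#zs)) = kron D (1\<^sub>m ?N) + kron (1\<^sub>m 2) E"
    using IH g by (simp add: z tensor_sum_list_Cons tensor_sum_def flip: E_def)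
  have T2: "tensor_sum_list (map fst (z#zs)) = kron M (1\<^sub>m ?N) + kron (1\<^sub>m 2) T"
    using IH g by (simp add: z tensor_sum_list_Cons tensor_sum_def flip: T_def)
  have len: "2 ^ length (z#zs) = 2 * ?N" by simp
  have c1: "kron P Q \<in> carrier_mat (2 * ?N) (2 * ?N)" using kron_carrier[of P Q] IH g by simp
  have c2: "kron D (1\<^sub>m ?N) \<in> carrier_mat (2 * ?N) (2 * ?N)" using kron_carrier[of D "1\<^sub>m ?N"] g by simp
  have c3: "kron (1\<^sub>m 2) E \<in> carrier_mat (2 * ?N) (2 * ?N)" using kron_carrier[of "1\<^sub>m 2" E] IH by simp
  have c4: "kron M (1\<^sub>m ?N) \<in> carrier_mat (2 * ?N) (2 * ?N)" using kron_carrier[of M "1\<^sub>m ?N"] g by simp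
  have c5: "kron (1\<^sub>m 2) T \<in> carrier_mat (2 * ?N) (2 * ?N)" using kron_carrier[of "1\<^sub>m 2" T] IH by simp
  have tr: "(kron P Q)\<^sup>T = kron P\<^sup>T Q\<^sup>T" by (rule transpose_kron)
  have o1: "kron P Q * (kron P Q)\<^sup>T = 1\<^sub>m (2 * ?N)"
    unfolding tr using g IH by (simp add: kron_mult[of _ 2 2 _ ?N ?N _ 2 _ ?N] kron_one)
  have o2: "(kron P Q)\<^sup>T * kron P Q = 1\<^sub>m (2 * ?N)"
    unfolding tr using g IH by (simp add: kron_mult[of _ 2 2 _ ?N ?N _ 2 _ ?N] kron_one)
  have "kron P Q * (kron D (1\<^sub>m ?N) + kron (1\<^sub>m 2) E) * (kron P Q)\<^sup>T
      = kron P Q * kron D (1\<^sub>m ?N) * (kron P Q)\<^sup>T + kron P Q * kron (1\<^sub>m 2) E * (kron P Q)\<^sup>T"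
    using c1 c2 c3 by (simp add: mult_add_distrib_mat[of _ "2*?N" "2*?N"] add_mult_distrib_mat[of _ "2*?N" "2*?N"])
  also have "kron P Q * kron D (1\<^sub>m ?N) * (kron P Q)\<^sup>T = kron M (1\<^sub>m ?N)"
    unfolding tr using g IH by (simp add: kron_mult[of _ 2 2 _ ?N ?N _ 2 _ ?N])
  also have "kron P Q * kron (1\<^sub>m 2) E * (kron P Q)\<^sup>T = kron (1\<^sub>m 2) T"
    unfolding tr using g IH by (simp add: kron_mult[of _ 2 2 _ ?N ?N _ 2 _ ?N])
  finally have dd: "kron P Q * (kron D (1\<^sub>m ?N) + kron (1\<^sub>m 2) E) * (kron P Q)\<^sup>T = kron M (1\<^sub>m ?N) + kron (1\<^sub>m 2) T" .
  show ?case unfolding Q2 E2 T2 len using c1 c2 c3 c4 c5 o1 o2 dd by simp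
qed

lemma scalar_transpose:
  assumes A: "A \<in> carrier_mat n m" and v: "v \<in> carrier_vec n" and w: "w \<in> carrier_vec m"
  shows "v \<bullet> (A *\<^sub>v w) = (transpose_mat A *\<^sub>v v) \<bullet> (w :: real vec)"
proof -
  have "v \<bullet> (A *\<^sub>v w) = (\<Sum>i\<in>{0..<n}. v $ i * (\<Sum>j\<in>{0..<m}. A $$ (i,j) * w $ j))"
    using A v w by (simp add: scalar_prod_def row_def)
  also have "\<dots> = (\<Sum>i\<in>{0..<n}. \<Sum>j\<in>{0..<m}. v $ i * A $$ (i,j) * w $ j)"
    by (simp add: sum_distrib_left mult.assoc)
  also have "\<dots> = (\<Sum>j\<in>{0..<m}. \<Sum>i\<in>{0..<n}. v $ i * A $$ (i,j) * w $ j)"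
    by (rule sum.swap)
  also have "\<dots> = (\<Sum>j\<in>{0..<m}. (\<Sum>i\<in>{0..<n}. A $$ (i,j) * v $ i) * w $ j)"
    by (simp add: sum_distrib_left sum_distrib_right mult_ac)
  also have "\<dots> = (transpose_mat A *\<^sub>v v) \<bullet> w"
    using A v w by (simp add: scalar_prod_def row_def col_def)
  finally show ?thesis .
qed

lemma diag_quad:
  fixes E :: "real mat"
  assumes E: "E \<in> carrier_mat N N" and Ee: "\<forall>i<N. \<forall>j<N. E $$ (i,j) = (if i = j then e i else 0)"
    and w: "w \<in> carrier_vec N"
  shows "w \<bullet> (E *\<^sub>v w) = (\<Sum>i\<in>{0..<N}. e i * (w $ i)^2)"
proof -
  have "E *\<^sub>v w = vec N (\<lambda>i. e i * w $ i)"
  proof (rule eq_vecI)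
    fix i assume "i < dim_vec (vec N (\<lambda>i. e i * w $ i))"
    then have i: "i < N" by simp
    have "(E *\<^sub>v w) $ i = (\<Sum>j\<in>{0..<N}. E $$ (i,j) * w $ j)"
      using E w i by (simp add: scalar_prod_def row_def)
    also have "\<dots> = (\<Sum>j\<in>{0..<N}. (if i = j then e i * w $ j else 0))"
      using Ee i by (intro sum.cong) auto
    also have "\<dots> = e i * w $ i" using i by simp
    finally show "(E *\<^sub>v w) $ i = vec N (\<lambda>i. e i * w $ i) $ i" using i by simp
  qed (use E in simp)
  then show ?thesis using w by (auto simp: scalar_prod_def power2_eq_square intro!: sum.cong)
qed

lemma psd_conj:
  assumes Q: "Q \<in> carrier_mat N N" and QQ: "Q * transpose_mat Q = 1\<^sub>m N" "transpose_mat Q * Q = 1\<^sub>m N"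
    and E: "E \<in> carrier_mat N N" and Ee: "\<forall>i<N. \<forall>j<N. E $$ (i,j) = (if i = j then e i else 0)"
    and N: "0 < N"
  shows "psd (Q * E * transpose_mat Q) \<longleftrightarrow> (\<forall>i<N. e i \<ge> 0)"
proof
  assume p: "psd (Q * E * transpose_mat Q)"
  then obtain n where n: "Q * E * transpose_mat Q \<in> carrier_mat n n"
     and pos: "\<forall>v \<in> carrier_vec n. v \<bullet> ((Q * E * transpose_mat Q) *\<^sub>v v) \<ge> 0"
    unfolding psd_def by auto
  from n Q have nN: "n = N" by auto
  show "\<forall>i<N. e i \<ge> 0"
  proof (intro allI impI)
    fix i assume i: "i < N"
    define v where "v = Q *\<^sub>v unit_vec N i"
    have v: "v \<in> carrier_vec N" unfolding v_def using Q by simp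
    have "transpose_mat Q *\<^sub>v v = unit_vec N i"
      unfolding v_def using Q QQ by (simp add: assoc_mult_mat_vec[symmetric, of _ N N _ N])
    have "0 \<le> v \<bullet> ((Q * E * transpose_mat Q) *\<^sub>v v)" using pos v nN by simp
    also have "(Q * E * transpose_mat Q) *\<^sub>v v = Q *\<^sub>v (E *\<^sub>v (transpose_mat Q *\<^sub>v v))"
      using Q E v by (simp add: assoc_mult_mat_vec[of _ N N _ N])
    also have "v \<bullet> (Q *\<^sub>v (E *\<^sub>v (transpose_mat Q *\<^sub>v v))) = (transpose_mat Q *\<^sub>v v) \<bullet> (E *\<^sub>v (transpose_mat Q *\<^sub>v v))"
      using Q E v by (intro scalar_transpose[of _ N N]) auto
    also have "\<dots> = unit_vec N i \<bullet> (E *\<^sub>v unit_vec N i)"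
      using \<open>transpose_mat Q *\<^sub>v v = unit_vec N i\<close> by simp
    also have "\<dots> = (\<Sum>j\<in>{0..<N}. e j * (unit_vec N i $ j)^2)"
      by (rule diag_quad[OF E Ee]) simp
    also have "\<dots> = (\<Sum>j\<in>{0..<N}. if j = i then e i else 0)"
      by (intro sum.cong) (auto simp: unit_vec_def)
    also have "\<dots> = e i" using i by simp
    finally show "e i \<ge> 0" .
  qed
next
  assume e: "\<forall>i<N. e i \<ge> 0"
  have Et: "transpose_mat E = E"
    by (rule eq_matI) (use E Ee in auto)
  have sym: "transpose_mat (Q * E * transpose_mat Q) = Q * E * transpose_mat Q"
  proof -
    have "transpose_mat (Q * E * transpose_mat Q) = transpose_mat (transpose_mat Q) * transpose_mat (Q * E)"
      using Q E by (intro transpose_mult[of _ N N]) auto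
    also have "transpose_mat (Q * E) = transpose_mat E * transpose_mat Q"
      using Q E by (intro transpose_mult[of _ N N]) auto
    finally show ?thesis using Q E Et by (simp add: assoc_mult_mat[of _ N N _ N _ N])
  qed
  have "\<forall>v \<in> carrier_vec N. v \<bullet> ((Q * E * transpose_mat Q) *\<^sub>v v) \<ge> 0"
  proof
    fix v :: "real vec" assume v: "v \<in> carrier_vec N"
    have "v \<bullet> ((Q * E * transpose_mat Q) *\<^sub>v v) = v \<bullet> (Q *\<^sub>v (E *\<^sub>v (transpose_mat Q *\<^sub>v v)))"
      using Q E v by (simp add: assoc_mult_mat_vec[of _ N N _ N])
    also have "\<dots> = (transpose_mat Q *\<^sub>v v) \<bullet> (E *\<^sub>v (transpose_mat Q *\<^sub>v v))"
      using Q E v by (intro scalar_transpose[of _ N N]) auto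
    also have "\<dots> = (\<Sum>j\<in>{0..<N}. e j * ((transpose_mat Q *\<^sub>v v) $ j)^2)"
      by (rule diag_quad[OF E Ee]) (use Q v in simp)
    also have "\<dots> \<ge> 0" using e by (intro sum_nonneg) auto
    finally show "v \<bullet> ((Q * E * transpose_mat Q) *\<^sub>v v) \<ge> 0" .
  qed
  then show "psd (Q * E * transpose_mat Q)"
    unfolding psd_def using Q E sym by (intro exI[of _ N]) auto
qed

definition m2 :: "real \<Rightarrow> real \<Rightarrow> real \<Rightarrow> real \<Rightarrow> real mat" where
  "m2 a b c e = mat_of_rows_list 2 [[a,b],[c,e]]"

lemma less2: "(i::nat) < 2 \<longleftrightarrow> i = 0 \<or> i = 1" by auto

lemma m2_index: "i < 2 \<Longrightarrow> j < 2 \<Longrightarrow> m2 a b c e $$ (i,j) = (if i = 0 then (if j = 0 then a else b) else (if j = 0 then c else e))"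
  unfolding m2_def mat_of_rows_list_def by (auto simp: less2)

lemma dim_m2[simp]: "dim_row (m2 a b c e) = 2" "dim_col (m2 a b c e) = 2"
  unfolding m2_def mat_of_rows_list_def by simp_all

lemma m2_carrier[simp]: "m2 a b c e \<in> carrier_mat 2 2"
  unfolding carrier_mat_def by simp

lemma sum2: "(\<Sum>k\<in>{0..<2::nat}. f k) = f 0 + (f 1 :: real)"
  by (simp add: numeral_2_eq_2)

lemma m2_mult: "m2 a b c e * m2 a' b' c' e' = m2 (a*a'+b*c') (a*b'+b*e') (c*a'+e*c') (c*b'+e*e')"
  by (rule eq_matI) (auto simp: m2_index less2 scalar_prod_def row_def col_def sum2)

lemma m2_transpose: "transpose_mat (m2 a b c e) = m2 a c b e"
  by (rule eq_matI) (auto simp: m2_index less2)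

lemma m2_one: "1\<^sub>m 2 = m2 1 0 0 1"
  by (rule eq_matI) (auto simp: m2_index less2)

definition dg :: "real \<Rightarrow> real mat" where "dg r = m2 (-r) 0 0 r"

lemma blk_m2: "blk u v x y = m2 (x-u) (y-v) (y-v) (-(x-u))"
  unfolding blk_def m2_def by simp

lemma exists_theta:
  fixes a b :: real
  shows "\<exists>th. a = sqrt (a^2+b^2) * cos th \<and> b = sqrt (a^2+b^2) * sin th"
proof (cases "a^2 + b^2 = 0")
  case True
  then have "a = 0" "b = 0" by (auto simp: add_nonneg_eq_0_iff)
  then show ?thesis by simp
next
  case False
  define r where "r = sqrt (a^2+b^2)"
  have rpos: "r > 0" unfolding r_def using False
    by (metis add_nonneg_nonneg real_sqrt_gt_0_iff zero_le_power2 order_le_less)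
  have rr: "r^2 = a^2 + b^2" unfolding r_def by simp
  have "(a/r)^2 + (b/r)^2 = (a^2+b^2)/r^2" by (simp add: power_divide add_divide_distrib)
  also have "\<dots> = 1" unfolding rr[symmetric] using rpos by simp
  finally have "(a/r)^2 + (b/r)^2 = 1" .
  then obtain th where "a/r = cos th" "b/r = sin th" by (rule sincos_total_2pi)
  then have "a = r * cos th" "b = r * sin th" using rpos by (auto simp: field_simps)
  then show ?thesis unfolding r_def by blast
qed

lemma exists_P:
  fixes a b :: real
  shows "\<exists>P. goodt (m2 a b b (-a), P, dg (sqrt (a^2 + b^2)))"
proof -
  define r where "r = sqrt (a^2 + b^2)"
  obtain th where th: "a = r * cos th" "b = r * sin th" using exists_theta[of a b] unfolding r_def by blast
  define t where "t = th / 2"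
  have ab: "a = r * (cos t ^ 2 - sin t ^ 2)" "b = r * (2 * sin t * cos t)"
    unfolding t_def using th cos_double[of "th / 2"] sin_double[of "th / 2"] by auto
  have one: "sin t ^ 2 + cos t ^ 2 = 1" by simp
  define P where "P = m2 (- sin t) (cos t) (cos t) (sin t)"
  have "P * dg r * transpose_mat P = m2 a b b (-a)"
    unfolding P_def dg_def m2_transpose m2_mult ab
    by (simp add: power2_eq_square algebra_simps)
  moreover have "P * transpose_mat P = 1\<^sub>m 2" "transpose_mat P * P = 1\<^sub>m 2"
    unfolding P_def m2_transpose m2_mult m2_one using one
    by (simp_all add: power2_eq_square algebra_simps)
  ultimately show ?thesis unfolding goodt_def r_def[symmetric] by (intro exI[of _ P]) (simp add: P_def dg_def)
qed

fun ev :: "real list \<Rightarrow> nat \<Rightarrow> real" where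
  "ev [] j = 0"
| "ev (r#rs) j = - ((-1)^(j div 2^length rs)) * r + ev rs (j mod 2^length rs)"

lemma dg_index: "a < 2 \<Longrightarrow> b < 2 \<Longrightarrow> dg r $$ (a,b) = (if a = b then - ((-1)^a) * r else 0)"
  unfolding dg_def by (auto simp: m2_index less2)

lemma diag_ts:
  "tensor_sum_list (map dg rs) \<in> carrier_mat (2^length rs) (2^length rs) \<and>
   (\<forall>i<2^length rs. \<forall>j<2^length rs. tensor_sum_list (map dg rs) $$ (i,j) = (if i = j then ev rs i else 0))"
proof (induction rs)
  case Nil
  then show ?case by (auto simp: tensor_sum_list_def)
next
  case (Cons r rs)
  let ?N = "2^length rs :: nat"
  define E where "E = tensor_sum_list (map dg rs)"
  have IH: "E \<in> carrier_mat ?N ?N" "\<forall>i<?N. \<forall>j<?N. E $$ (i,j) = (if i = j then ev rs i else 0)"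
    using Cons unfolding E_def by auto
  have eq: "tensor_sum_list (map dg (r#rs)) = kron (dg r) (1\<^sub>m ?N) + kron (1\<^sub>m 2) E"
    using IH by (simp add: tensor_sum_list_Cons tensor_sum_def dg_def flip: E_def)
  have dgc: "dg r \<in> carrier_mat 2 2" unfolding dg_def by simp
  have c: "kron (dg r) (1\<^sub>m ?N) + kron (1\<^sub>m 2) E \<in> carrier_mat (2 * ?N) (2 * ?N)"
    using IH dgc by (intro add_carrier_mat kron_carrier') auto
  have ent: "(kron (dg r) (1\<^sub>m ?N) + kron (1\<^sub>m 2) E) $$ (i,j) = (if i = j then ev (r#rs) i else 0)"
    if i: "i < 2 * ?N" and j: "j < 2 * ?N" for i j
  proof -
    note bi = divmod_bounds[OF i] and bj = divmod_bounds[OF j]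
    have ij: "(i = j) = (i div ?N = j div ?N \<and> i mod ?N = j mod ?N)"
      by (metis div_mult_mod_eq)
    have "(kron (dg r) (1\<^sub>m ?N) + kron (1\<^sub>m 2) E) $$ (i,j)
        = dg r $$ (i div ?N, j div ?N) * (1\<^sub>m ?N) $$ (i mod ?N, j mod ?N) + (1\<^sub>m 2) $$ (i div ?N, j div ?N) * E $$ (i mod ?N, j mod ?N)"
      using i j IH dgc by simp
    also have "\<dots> = (if i = j then ev (r#rs) i else 0)"
      using bi bj IH(2) unfolding ij by (auto simp: dg_index)
    finally show ?thesis .
  qed
  show ?case using c ent unfolding eq by simp
qed

lemma PiE_Suc_prod:
  "(\<Prod>\<sigma>\<in>{..<Suc n} \<rightarrow>\<^sub>E A. F \<sigma>) = (\<Prod>a\<in>A. \<Prod>\<sigma>\<in>{..<n} \<rightarrow>\<^sub>E A. (F (case_nat a \<sigma>) :: real))"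
proof -
  let ?g = "\<lambda>(a, \<sigma>). case_nat a \<sigma>"
  have inj: "inj_on ?g (A \<times> ({..<n} \<rightarrow>\<^sub>E A))"
  proof (rule inj_onI, clarify)
    fix a \<sigma> b \<tau> assume eq: "case_nat a \<sigma> = case_nat b \<tau>"
    have "a = b" using fun_cong[OF eq, of 0] by simp
    moreover have "\<sigma> = \<tau>" using fun_cong[OF eq, of "Suc j" for j] by auto
    ultimately show "a = b \<and> \<sigma> = \<tau>" by simp
  qed
  have img: "?g ` (A \<times> ({..<n} \<rightarrow>\<^sub>E A)) = {..<Suc n} \<rightarrow>\<^sub>E A"
  proof
    show "?g ` (A \<times> ({..<n} \<rightarrow>\<^sub>E A)) \<subseteq> {..<Suc n} \<rightarrow>\<^sub>E A"
      by (auto simp: PiE_def Pi_def extensional_def split: nat.splits)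
  next
    show "{..<Suc n} \<rightarrow>\<^sub>E A \<subseteq> ?g ` (A \<times> ({..<n} \<rightarrow>\<^sub>E A))"
    proof
      fix \<sigma> assume s: "\<sigma> \<in> {..<Suc n} \<rightarrow>\<^sub>E A"
      have "\<sigma> = ?g (\<sigma> 0, \<lambda>j. \<sigma> (Suc j))"
        by (auto simp: fun_eq_iff split: nat.splits)
      moreover have "(\<sigma> 0, \<lambda>j. \<sigma> (Suc j)) \<in> A \<times> ({..<n} \<rightarrow>\<^sub>E A)"
        using s by (auto simp: PiE_def Pi_def extensional_def)
      ultimately show "\<sigma> \<in> ?g ` (A \<times> ({..<n} \<rightarrow>\<^sub>E A))" by (metis image_eqI)
    qed
  qed
  have "(\<Prod>\<sigma>\<in>{..<Suc n} \<rightarrow>\<^sub>E A. F \<sigma>) = (\<Prod>p\<in>A \<times> ({..<n} \<rightarrow>\<^sub>E A). F (?g p))"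
    using prod.reindex[OF inj, of F] img by simp
  also have "\<dots> = (\<Prod>a\<in>A. \<Prod>\<sigma>\<in>{..<n} \<rightarrow>\<^sub>E A. F (case_nat a \<sigma>))"
    by (simp add: prod.cartesian_product split_def)
  finally show ?thesis .
qed

lemma ev_prod:
  "(\<Prod>j<2^length rs. d + ev rs j) =
   (\<Prod>\<sigma>\<in>{..<length rs} \<rightarrow>\<^sub>E {0::nat, 1}. d - (\<Sum>i<length rs. (-1) ^ (\<sigma> i) * rs ! i))"
proof (induction rs arbitrary: d)
  case Nil
  then show ?case by simp
next
  case (Cons r rs)
  let ?N = "2^length rs :: nat"
  have "(\<Prod>j<2^length (r#rs). d + ev (r#rs) j) = (\<Prod>j<2 * ?N. (d - (-1)^(j div ?N) * r) + ev rs (j mod ?N))"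
    by (simp add: algebra_simps)
  also have "\<dots> = (\<Prod>a<2. \<Prod>b<?N. (d - (-1)^a * r) + ev rs b)"
    by (rule prod_divmod)
  also have "\<dots> = (\<Prod>a<2. \<Prod>\<sigma>\<in>{..<length rs} \<rightarrow>\<^sub>E {0::nat, 1}. (d - (-1)^a * r) - (\<Sum>i<length rs. (-1) ^ (\<sigma> i) * rs ! i))"
    using Cons.IH by simp
  also have "\<dots> = (\<Prod>a\<in>{0::nat,1}. \<Prod>\<sigma>\<in>{..<length rs} \<rightarrow>\<^sub>E {0::nat, 1}. d - (\<Sum>i<length (r#rs). (-1) ^ (case_nat a \<sigma> i) * (r#rs) ! i))"
  proof -
    have l2: "{..<2::nat} = {0,1}" by auto
    show ?thesis unfolding l2
      by (intro prod.cong refl) (simp only: length_Cons sum.lessThan_Suc_shift, simp)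
  qed
  also have "\<dots> = (\<Prod>\<sigma>\<in>{..<length (r#rs)} \<rightarrow>\<^sub>E {0::nat, 1}. d - (\<Sum>i<length (r#rs). (-1) ^ (\<sigma> i) * (r#rs) ! i))"
    by (simp add: PiE_Suc_prod)
  finally show ?case .
qed

lemma ev_zero: "ev rs 0 = - sum_list rs"
  by (induction rs) auto

lemma ev_lower: "\<forall>r\<in>set rs. r \<ge> 0 \<Longrightarrow> ev rs j \<ge> - sum_list rs"
proof (induction rs arbitrary: j)
  case Nil then show ?case by simp
next
  case (Cons r rs)
  have "- ((-1)^(j div 2^length rs)) * r \<ge> - r"
    using Cons.prems by (cases "even (j div 2^length rs)") auto
  moreover have "ev rs (j mod 2^length rs) \<ge> - sum_list rs" using Cons by auto
  ultimately show ?case by simp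
qed

lemma prod_list_upt: "prod_list (map f [0..<n]) = (\<Prod>j<n. (f j :: real))"
  by (induction n) auto

lemma sum_list_upt: "sum_list (map f [0..<n]) = (\<Sum>j<n. (f j :: real))"
  by (induction n) auto

lemma main_xy:
  fixes k :: nat and u v :: "nat \<Rightarrow> real" and d x y :: real
  shows "det (Lk k u v d x y) =
            (\<Prod>\<sigma>\<in>{..<k} \<rightarrow>\<^sub>E {0::nat, 1}.
               d - (\<Sum>i<k. (-1) ^ (\<sigma> i) * sqrt ((x - u i)^2 + (y - v i)^2)))
       \<and> ((\<Sum>i<k. sqrt ((x - u i)^2 + (y - v i)^2)) \<le> d \<longleftrightarrow> psd (Lk k u v d x y))"
proof -
  define rr where "rr i = sqrt ((x - u i)^2 + (y - v i)^2)" for i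
  have "\<exists>P. goodt (blk (u i) (v i) x y, P, dg (rr i))" for i
    unfolding blk_m2 rr_def using exists_P[of "x - u i" "y - v i"] by simp
  then have "\<forall>i. \<exists>P. goodt (blk (u i) (v i) x y, P, dg (rr i))" by blast
  then obtain PP where PP: "\<forall>i. goodt (blk (u i) (v i) x y, PP i, dg (rr i))" by metis
  define zs where "zs = map (\<lambda>i. (blk (u i) (v i) x y, PP i, dg (rr i))) [0..<k]"
  define rs where "rs = map rr [0..<k]"
  define N where "N = (2::nat)^k"
  define Q where "Q = foldr kron (map (\<lambda>z. fst (snd z)) zs) (1\<^sub>m 1)"
  define D where "D = tensor_sum_list (map dg rs)"
  define T where "T = tensor_sum_list (map (\<lambda>i. blk (u i) (v i) x y) [0..<k])"
  have lz: "length zs = k" unfolding zs_def by simp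
  have lr: "length rs = k" unfolding rs_def by simp
  have m1: "map fst zs = map (\<lambda>i. blk (u i) (v i) x y) [0..<k]" unfolding zs_def by simp
  have m2': "map (\<lambda>z. snd (snd z)) zs = map dg rs" unfolding zs_def rs_def by simp
  have "\<forall>z\<in>set zs. goodt z" using PP unfolding zs_def by auto
  from decomp[OF this, unfolded lz m1 m2', folded Q_def D_def T_def N_def]
  have Q: "Q \<in> carrier_mat N N" and Dc: "D \<in> carrier_mat N N" and Tc: "T \<in> carrier_mat N N"
    and QQ: "Q * Q\<^sup>T = 1\<^sub>m N" "Q\<^sup>T * Q = 1\<^sub>m N" and QDQ: "Q * D * Q\<^sup>T = T" by auto
  from diag_ts[of rs, unfolded lr, folded D_def N_def]
  have De: "\<forall>i<N. \<forall>j<N. D $$ (i,j) = (if i = j then ev rs i else 0)" by auto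
  define E where "E = d \<cdot>\<^sub>m 1\<^sub>m N + D"
  have Ec: "E \<in> carrier_mat N N" unfolding E_def using Dc by simp
  have Ee: "\<forall>i<N. \<forall>j<N. E $$ (i,j) = (if i = j then d + ev rs i else 0)"
    unfolding E_def using Dc De by auto
  have L: "Lk k u v d x y = Q * E * Q\<^sup>T"
  proof -
    have "Q * E = d \<cdot>\<^sub>m Q + Q * D"
    proof -
      have "Q * E = Q * (d \<cdot>\<^sub>m 1\<^sub>m N) + Q * D"
        unfolding E_def by (rule mult_add_distrib_mat[OF Q _ Dc]) simp
      also have "Q * (d \<cdot>\<^sub>m 1\<^sub>m N) = d \<cdot>\<^sub>m (Q * 1\<^sub>m N)"
        by (rule mult_smult_distrib[OF Q one_carrier_mat])
      finally show ?thesis using Q by simp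
    qed
    then have "Q * E * Q\<^sup>T = (d \<cdot>\<^sub>m Q) * Q\<^sup>T + Q * D * Q\<^sup>T"
      using Q Dc by (simp add: add_mult_distrib_mat[of _ N N])
    also have "(d \<cdot>\<^sub>m Q) * Q\<^sup>T = d \<cdot>\<^sub>m 1\<^sub>m N"
      using Q QQ by (simp add: mult_smult_assoc_mat[of _ N N])
    finally show ?thesis unfolding Lk_def using QDQ by (simp add: T_def N_def)
  qed
  have N0: "0 < N" unfolding N_def by simp
  have detE: "det E = (\<Prod>j<N. d + ev rs j)"
  proof -
    have "upper_triangular E" unfolding upper_triangular_def using Ec Ee by auto
    then have "det E = prod_list (diag_mat E)" using det_upper_triangular Ec by blast
    also have "\<dots> = prod_list (map (\<lambda>j. d + ev rs j) [0..<N])"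
      unfolding diag_mat_def using Ec Ee by (intro arg_cong[where f=prod_list] map_cong) auto
    finally show ?thesis by (simp add: prod_list_upt)
  qed
  have detQ: "det Q * det Q = 1"
  proof -
    have "det (Q * Q\<^sup>T) = det Q * det Q\<^sup>T" using Q by (intro det_mult) auto
    then show ?thesis using QQ det_transpose[OF Q] by simp
  qed
  have "det (Lk k u v d x y) = det E"
  proof -
    have "det (Q * E * Q\<^sup>T) = det (Q * E) * det Q\<^sup>T" using Q Ec by (intro det_mult) auto
    also have "\<dots> = det Q * det E * det Q" using Q Ec det_mult[OF Q Ec] det_transpose[OF Q] by simp
    also have "\<dots> = det E" using detQ by (simp add: mult_ac)
    finally show ?thesis unfolding L .
  qed
  also have "\<dots> = (\<Prod>\<sigma>\<in>{..<k} \<rightarrow>\<^sub>E {0::nat, 1}. d - (\<Sum>i<k. (-1) ^ (\<sigma> i) * rs ! i))"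
    unfolding detE N_def using ev_prod[where rs=rs and d=d] lr by simp
  also have "\<dots> = (\<Prod>\<sigma>\<in>{..<k} \<rightarrow>\<^sub>E {0::nat, 1}. d - (\<Sum>i<k. (-1) ^ (\<sigma> i) * rr i))"
    unfolding rs_def by (intro prod.cong refl arg_cong[where f="\<lambda>t. d - t"] sum.cong) auto
  finally have part1: "det (Lk k u v d x y) = (\<Prod>\<sigma>\<in>{..<k} \<rightarrow>\<^sub>E {0::nat, 1}. d - (\<Sum>i<k. (-1) ^ (\<sigma> i) * rr i))" .
  have srs: "sum_list rs = (\<Sum>i<k. rr i)" unfolding rs_def by (simp add: sum_list_upt)
  have nn: "\<forall>r\<in>set rs. r \<ge> 0" unfolding rs_def rr_def by auto
  have "psd (Lk k u v d x y) \<longleftrightarrow> (\<forall>j<N. d + ev rs j \<ge> 0)"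
    unfolding L by (rule psd_conj[OF Q QQ Ec Ee N0])
  also have "\<dots> \<longleftrightarrow> (\<Sum>i<k. rr i) \<le> d"
  proof
    assume "\<forall>j<N. d + ev rs j \<ge> 0"
    then have "d + ev rs 0 \<ge> 0" using N0 by blast
    then show "(\<Sum>i<k. rr i) \<le> d" using ev_zero[of rs] srs by simp
  next
    assume "(\<Sum>i<k. rr i) \<le> d"
    then show "\<forall>j<N. d + ev rs j \<ge> 0" using ev_lower[OF nn] srs by (metis add.commute diff_ge_0_iff_ge le_diff_eq order_trans diff_minus_eq_add minus_diff_eq neg_le_iff_le)
  qed
  finally show ?thesis using part1 unfolding rr_def by simp
qed

theorem theorem2p3:
  fixes k :: nat and u v :: "nat \<Rightarrow> real" and d :: real
  shows "(\<forall>x y. det (Lk k u v d x y) =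
            (\<Prod>\<sigma>\<in>{..<k} \<rightarrow>\<^sub>E {0::nat, 1}.
               d - (\<Sum>i<k. (-1) ^ (\<sigma> i) * sqrt ((x - u i)^2 + (y - v i)^2))))
       \<and> {(x, y). (\<Sum>i<k. sqrt ((x - u i)^2 + (y - v i)^2)) \<le> d}
         = {(x, y). psd (Lk k u v d x y)}"
  using main_xy[of k u v d] by auto
end
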